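(* Let $\{x_i,v_i\}_{i\in[N]}$ be the global solution of the delayed Cucker–Smale system described in the context, let $\beta>0$ and \[ G(t):=d_v(t)+\beta\int_{\max\{0,t-2\tau\}}^t e^{-(t-s)}\int_s^t\max_{i\in[N]}|\dot v_i(r)|\,\mathrm dr\,\mathrm ds,\qquad t\ge0. \] Then for all $i,j\in[N]$ and $t\ge2\tau$, \[ |x_j(t-\tau)-x_i(t-\sigma)|\le|x_j(\tau)-x_i(2\tau-\sigma)|+\int_{2\tau}^t\Big(G(s-\tau)+\beta^{-1}e^{2\tau}G(s-\sigma)+\int_{s-\tau}^{s-\sigma}G(r-\tau)\,\mathrm dr\Big)\mathrm ds. \]
   Context: Let $N\ge2$, $d\ge1$ be integers, $[N]=\{1,\dots,N\}$, $0\le\sigma\le\tau$. Let $\psi:[0,\infty)\to[0,\infty)$ be continuous, nonincreasing, positive everywhere, with $\sup\psi\le1$. Given $x_i^0\in C^1([-\tau,0],\mathbb{R}^d)$, $v_i^0\in C([-\tau,0],\mathbb{R}^d)$ with $\frac{\mathrm d}{\mathrm dt}x_i^0=v_i^0$, $\{x_i,v_i\}$ is the global solution of $\dot x_i(t)=v_i(t)$, $\dot v_i(t)=\sum_{j\ne i}a_{ij}(t)(v_j(t-\tau)-v_i(t-\sigma))$ for $t>0$, with $a_{ij}(t)=\frac1{N-1}\psi(|x_i(t-\sigma)-x_j(t-\tau)|)$, and $x_i=x_i^0$, $v_i=v_i^0$ on $[-\tau,0]$ ($v_i$ continuously differentiable on $[0,\infty)$). $d_v(t):=\max_{i,j}|v_i(t)-v_j(t)|$.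 *)

theory Defs
  imports "HOL-Analysis.Analysis"
begin

definition vdiam :: "nat \<Rightarrow> (nat \<Rightarrow> real \<Rightarrow> 'a::euclidean_space) \<Rightarrow> real \<Rightarrow> real" where
  "vdiam N v t = Max {norm (v i t - v j t) | i j. i \<in> {1..N} \<and> j \<in> {1..N}}"

definition cs_weight :: "nat \<Rightarrow> (real \<Rightarrow> real) \<Rightarrow> real \<Rightarrow> real \<Rightarrow>
    (nat \<Rightarrow> real \<Rightarrow> 'a::euclidean_space) \<Rightarrow> nat \<Rightarrow> nat \<Rightarrow> real \<Rightarrow> real" where
  "cs_weight N \<psi> \<sigma> \<tau> x i j t = \<psi> (norm (x i (t - \<sigma>) - x j (t - \<tau>))) / (real N - 1)"

text \<open>The functional G(t) of the paper; dv i r stands for the derivative of v_i at r.\<close>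
definition Gfun :: "nat \<Rightarrow> real \<Rightarrow> real \<Rightarrow> (nat \<Rightarrow> real \<Rightarrow> 'a::euclidean_space)
    \<Rightarrow> (nat \<Rightarrow> real \<Rightarrow> 'a) \<Rightarrow> real \<Rightarrow> real" where
  "Gfun N \<tau> \<beta> v dv t = vdiam N v t + \<beta> * integral {max 0 (t - 2 * \<tau>)..t}
      (\<lambda>s. exp (- (t - s)) * integral {s..t} (\<lambda>r. Max ((\<lambda>i. norm (dv i r)) ` {1..N})))"

end

theory Submission
  imports Defs
begin


lemma cont_Max_fin:
  fixes f :: "'i \<Rightarrow> 'b::topological_space \<Rightarrow> real"
  assumes "finite I" "I \<noteq> {}" "\<And>i. i \<in> I \<Longrightarrow> continuous_on S (f i)"
  shows "continuous_on S (\<lambda>x. Max ((\<lambda>i. f i x) ` I))"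
  using assms
proof (induction I rule: finite_ne_induct)
  case (singleton x)
  then show ?case by simp
next
  case (insert x F)
  have "continuous_on S (\<lambda>y. max (f x y) (Max ((\<lambda>i. f i y) ` F)))"
    using insert by (intro continuous_on_max) auto
  moreover have "\<And>y. Max ((\<lambda>i. f i y) ` insert x F) = max (f x y) (Max ((\<lambda>i. f i y) ` F))"
    using insert by simp
  ultimately show ?case by simp
qed

lemma shift_deriv:
  fixes g :: "real \<Rightarrow> 'a::real_normed_vector"
  assumes "(g has_vector_derivative g') (at (s - c) within T)"
    and "(\<lambda>u. u - c) ` S \<subseteq> T"
  shows "((\<lambda>u. g (u - c)) has_vector_derivative g') (at s within S)"
proof -
  have d1: "((\<lambda>u. u - c) has_vector_derivative 1) (at s within S)"
    by (auto intro!: derivative_eq_intros)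
  have "(g has_vector_derivative g') (at ((\<lambda>u. u - c) s) within (\<lambda>u. u - c) ` S)"
    using has_vector_derivative_within_subset[OF assms(1) assms(2)] by simp
  from vector_diff_chain_within[OF d1 this] show ?thesis by (simp add: o_def)
qed



theorem lemma4p4:
  fixes N :: nat and \<sigma> \<tau> \<beta> :: real and \<psi> :: "real \<Rightarrow> real"
    and x v dv :: "nat \<Rightarrow> real \<Rightarrow> 'a::euclidean_space"
  assumes N: "N \<ge> 2"
    and delays: "0 \<le> \<sigma>" "\<sigma> \<le> \<tau>"
    and psi_cont: "continuous_on {0..} \<psi>"
    and psi_mono: "\<And>r s. 0 \<le> r \<Longrightarrow> r \<le> s \<Longrightarrow> \<psi> s \<le> \<psi> r"
    and psi_pos: "\<And>r. 0 \<le> r \<Longrightarrow> 0 < \<psi> r"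
    and psi_le1: "\<And>r. 0 \<le> r \<Longrightarrow> \<psi> r \<le> 1"
    and v_cont: "\<And>i. i \<in> {1..N} \<Longrightarrow> continuous_on {-\<tau>..} (v i)"
    and x_deriv: "\<And>i t. i \<in> {1..N} \<Longrightarrow> -\<tau> \<le> t \<Longrightarrow>
                    (x i has_vector_derivative v i t) (at t within {-\<tau>..})"
    and v_C1: "\<And>i t. i \<in> {1..N} \<Longrightarrow> 0 \<le> t \<Longrightarrow>
                    (v i has_vector_derivative dv i t) (at t within {0..})"
    and dv_cont: "\<And>i. i \<in> {1..N} \<Longrightarrow> continuous_on {0..} (dv i)"
    and ode: "\<And>i t. i \<in> {1..N} \<Longrightarrow> 0 < t \<Longrightarrow>
                dv i t = (\<Sum>j\<in>{1..N} - {i}. cs_weight N \<psi> \<sigma> \<tau> x i j t *\<^sub>R (v j (t - \<tau>) - v i (t - \<sigma>)))"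
    and beta: "\<beta> > 0"
    and ij: "i \<in> {1..N}" "j \<in> {1..N}"
    and t: "t \<ge> 2 * \<tau>"
  shows "norm (x j (t - \<tau>) - x i (t - \<sigma>)) \<le> norm (x j \<tau> - x i (2 * \<tau> - \<sigma>))
          + integral {2 * \<tau>..t} (\<lambda>s. Gfun N \<tau> \<beta> v dv (s - \<tau>)
               + exp (2 * \<tau>) / \<beta> * Gfun N \<tau> \<beta> v dv (s - \<sigma>)
               + integral {s - \<tau>..s - \<sigma>} (\<lambda>r. Gfun N \<tau> \<beta> v dv (r - \<tau>)))"
proof -
  have tau0: "0 \<le> \<tau>" using delays by linarith
  have fin: "finite {1..N}" and ne: "{1..N} \<noteq> {}" using N by auto
  define M where "M = (\<lambda>r. Max ((\<lambda>k. norm (dv k r)) ` {1..N}))"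
  define D where "D = vdiam N v"
  define G where "G = Gfun N \<tau> \<beta> v dv"
  define P where "P = (\<lambda>x. integral {0..x} M)"
  define J where "J = (\<lambda>u. integral {max 0 (u - 2 * \<tau>)..u} (\<lambda>s. exp (- (u - s)) * integral {s..u} M))"
  have G_eq: "\<And>u. G u = D u + \<beta> * J u"
    by (simp add: G_def Gfun_def D_def J_def M_def)
  have M_cont: "continuous_on {0..} M"
    unfolding M_def
    by (rule cont_Max_fin[OF fin ne]) (auto intro!: continuous_on_norm dv_cont)
  have M_ge: "\<And>k r. k \<in> {1..N} \<Longrightarrow> norm (dv k r) \<le> M r"
    unfolding M_def using fin by (intro Max_ge) auto
  have M_nn: "\<And>r. 0 \<le> M r"
    using M_ge[of 1] N by (meson atLeastAtMost_iff norm_ge_zero one_le_numeral order.trans le_refl)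
  have v_cont0: "\<And>k. k \<in> {1..N} \<Longrightarrow> continuous_on {0..} (v k)"
    by (rule continuous_on_subset[OF v_cont]) (use tau0 in auto)
  have D_eq: "\<And>u. D u = Max ((\<lambda>(i, j). norm (v i u - v j u)) ` ({1..N} \<times> {1..N}))"
    unfolding D_def vdiam_def by (intro arg_cong[where f=Max]) fastforce
  have D_cont: "continuous_on {0..} D"
  proof -
    have "continuous_on {0..} (\<lambda>u. Max ((\<lambda>p. (\<lambda>(i, j) u. norm (v i u - v j u)) p u) ` ({1..N} \<times> {1..N})))"
    proof (rule cont_Max_fin)
      fix p assume p: "p \<in> {1..N} \<times> {1..N}"
      obtain a b where ab: "p = (a, b)" by force
      have "continuous_on {0..} (v a)" "continuous_on {0..} (v b)"
        using p ab v_cont0 by auto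
      then show "continuous_on {0..} ((\<lambda>(i, j) u. norm (v i u - v j u)) p)"
        unfolding ab by (auto intro!: continuous_intros)
    qed (use fin ne in auto)
    moreover have "D = (\<lambda>u. Max ((\<lambda>p. (\<lambda>(i, j) u. norm (v i u - v j u)) p u) ` ({1..N} \<times> {1..N})))"
      by (rule ext) (simp add: D_eq split_beta)
    ultimately show ?thesis by simp
  qed
  have D_ge: "\<And>a b u. a \<in> {1..N} \<Longrightarrow> b \<in> {1..N} \<Longrightarrow> norm (v a u - v b u) \<le> D u"
    unfolding D_eq using fin by (intro Max_ge) auto
  have D_nn: "\<And>u. 0 \<le> D u"
    using D_ge[of 1 1] N by fastforce
  have M_int: "\<And>a b. 0 \<le> a \<Longrightarrow> M integrable_on {a..b}"
    by (rule integrable_continuous_real) (auto intro: continuous_on_subset[OF M_cont])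
  have P_diff: "\<And>a b. 0 \<le> a \<Longrightarrow> a \<le> b \<Longrightarrow> integral {a..b} M = P b - P a"
  proof -
    fix a b :: real assume "0 \<le> a" "a \<le> b"
    then have "integral {0..a} M + integral {a..b} M = integral {0..b} M"
      by (intro Henstock_Kurzweil_Integration.integral_combine M_int) auto
    then show "integral {a..b} M = P b - P a" by (simp add: P_def)
  qed
  have P_cont: "\<And>T. continuous_on {0..T} P"
    unfolding P_def by (rule indefinite_integral_continuous_1) (simp add: M_int)
  have P_mono: "\<And>a b. 0 \<le> a \<Longrightarrow> a \<le> b \<Longrightarrow> P a \<le> P b"
    using P_diff M_int M_nn integral_nonneg by (metis diff_ge_0_iff_ge)
  have v_diff: "\<And>k (a::real) (b::real). k \<in> {1..N} \<Longrightarrow> 0 \<le> a \<Longrightarrow> a \<le> b \<Longrightarrow> norm (v k b - v k a) \<le> integral {a..b} M"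
  proof -
    fix k and a b :: real assume k: "k \<in> {1..N}" and a: "0 \<le> a" and ab: "a \<le> b"
    have "(dv k has_integral (v k b - v k a)) {a..b}"
      by (rule fundamental_theorem_of_calculus[OF ab])
         (use a k in \<open>auto intro!: has_vector_derivative_within_subset[OF v_C1]\<close>)
    then have eq: "v k b - v k a = integral {a..b} (dv k)" by (simp add: integral_unique)
    have "dv k integrable_on {a..b}"
      by (rule integrable_continuous_real) (use a k in \<open>auto intro!: continuous_on_subset[OF dv_cont]\<close>)
    then show "norm (v k b - v k a) \<le> integral {a..b} M"
      unfolding eq using M_int[OF a] M_ge[OF k] by (intro integral_norm_bound_integral) auto
  qed
  have ode_bd: "\<And>r. \<tau> \<le> r \<Longrightarrow> 0 < r \<Longrightarrow> M r \<le> D (r - \<tau>) + integral {r - \<tau>..r - \<sigma>} M"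
  proof -
    fix r :: real assume r1: "\<tau> \<le> r" and r2: "0 < r"
    define B where "B = D (r - \<tau>) + integral {r - \<tau>..r - \<sigma>} M"
    have Nm: "real N - 1 > 0" using N by simp
    have bk: "norm (dv k r) \<le> B" if k: "k \<in> {1..N}" for k
    proof -
      have tb: "norm (cs_weight N \<psi> \<sigma> \<tau> x k l r *\<^sub>R (v l (r - \<tau>) - v k (r - \<sigma>))) \<le> 1 / (real N - 1) * B"
        if l: "l \<in> {1..N}" for l
      proof -
        have w0: "0 \<le> cs_weight N \<psi> \<sigma> \<tau> x k l r"
          using psi_pos[of "norm (x k (r - \<sigma>) - x l (r - \<tau>))"] Nm by (simp add: cs_weight_def)
        have w1: "cs_weight N \<psi> \<sigma> \<tau> x k l r \<le> 1 / (real N - 1)"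
          using psi_le1[of "norm (x k (r - \<sigma>) - x l (r - \<tau>))"] Nm
          by (simp add: cs_weight_def divide_right_mono)
        have nb: "norm (v l (r - \<tau>) - v k (r - \<sigma>)) \<le> B"
        proof -
          have "norm (v l (r - \<tau>) - v k (r - \<sigma>)) \<le> norm (v l (r - \<tau>) - v k (r - \<tau>)) + norm (v k (r - \<tau>) - v k (r - \<sigma>))"
            using norm_triangle_ineq[of "v l (r - \<tau>) - v k (r - \<tau>)" "v k (r - \<tau>) - v k (r - \<sigma>)"] by simp
          also have "\<dots> \<le> D (r - \<tau>) + integral {r - \<tau>..r - \<sigma>} M"
            using D_ge[OF l k, of "r - \<tau>"] v_diff[OF k, of "r - \<tau>" "r - \<sigma>"] r1 delays
            by (simp add: norm_minus_commute)
          finally show ?thesis by (simp add: B_def)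
        qed
        have "norm (cs_weight N \<psi> \<sigma> \<tau> x k l r *\<^sub>R (v l (r - \<tau>) - v k (r - \<sigma>)))
            = cs_weight N \<psi> \<sigma> \<tau> x k l r * norm (v l (r - \<tau>) - v k (r - \<sigma>))" using w0 by simp
        also have "\<dots> \<le> 1 / (real N - 1) * B"
          by (rule mult_mono[OF w1 nb]) (use Nm in auto)
        finally show ?thesis .
      qed
      have "norm (dv k r) = norm (\<Sum>l\<in>{1..N} - {k}. cs_weight N \<psi> \<sigma> \<tau> x k l r *\<^sub>R (v l (r - \<tau>) - v k (r - \<sigma>)))"
        using ode[OF k r2] by simp
      also have "\<dots> \<le> (\<Sum>l\<in>{1..N} - {k}. norm (cs_weight N \<psi> \<sigma> \<tau> x k l r *\<^sub>R (v l (r - \<tau>) - v k (r - \<sigma>))))"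
        by (rule norm_sum)
      also have "\<dots> \<le> (\<Sum>l\<in>{1..N} - {k}. 1 / (real N - 1) * B)"
        by (rule sum_mono) (use tb in auto)
      also have "\<dots> = B"
      proof -
        have "card ({1..N} - {k}) = N - 1" using k by simp
        then have "real (card ({1..N} - {k})) = real N - 1" using N by simp
        then show ?thesis using Nm by simp
      qed
      finally show ?thesis .
    qed
    show "M r \<le> D (r - \<tau>) + integral {r - \<tau>..r - \<sigma>} M"
    proof -
      have "M r = Max ((\<lambda>k. norm (dv k r)) ` {1..N})" unfolding M_def by simp
      also have "\<dots> \<le> B" using fin ne bk by (simp add: Max_le_iff)
      finally show ?thesis by (simp add: B_def)
    qed
  qed
  have J_nn: "\<And>u. 0 \<le> J u"
  proof -
    fix u :: real
    let ?f = "\<lambda>s. exp (- (u - s)) * integral {s..u} M"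
    show "0 \<le> J u"
    proof (cases "?f integrable_on {max 0 (u - 2 * \<tau>)..u}")
      case True
      then show ?thesis unfolding J_def
        by (rule integral_nonneg) (auto intro!: mult_nonneg_nonneg integral_nonneg M_int M_nn)
    next
      case False
      then show ?thesis unfolding J_def by (simp add: not_integrable_integral)
    qed
  qed
  have DG: "\<And>u. D u \<le> G u" using G_eq J_nn beta by (simp add: less_imp_le)
  have JG: "\<And>u. \<beta> * J u \<le> G u" using G_eq D_nn by simp
  define Q where "Q = (\<lambda>x. integral {0..x} (\<lambda>s. exp s * P s))"
  define a where "a = (\<lambda>u::real. max 0 (u - 2 * \<tau>))"
  have EP_cont: "\<And>T. continuous_on {0..T} (\<lambda>s. exp s * P s)"
    by (intro continuous_intros P_cont)
  have EP_int: "\<And>c d. 0 \<le> c \<Longrightarrow> (\<lambda>s. exp s * P s) integrable_on {c..d}"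
    by (rule integrable_continuous_real, rule continuous_on_subset[OF EP_cont]) auto
  have Q_cont: "\<And>T. continuous_on {0..T} Q"
    unfolding Q_def by (rule indefinite_integral_continuous_1) (simp add: EP_int)
  have Q_diff: "\<And>c d. 0 \<le> c \<Longrightarrow> c \<le> d \<Longrightarrow> integral {c..d} (\<lambda>s. exp s * P s) = Q d - Q c"
  proof -
    fix c d :: real assume "0 \<le> c" "c \<le> d"
    then have "integral {0..c} (\<lambda>s. exp s * P s) + integral {c..d} (\<lambda>s. exp s * P s) = integral {0..d} (\<lambda>s. exp s * P s)"
      by (intro Henstock_Kurzweil_Integration.integral_combine EP_int) auto
    then show "integral {c..d} (\<lambda>s. exp s * P s) = Q d - Q c" by (simp add: Q_def)
  qed
  have J_eq: "\<And>u. 0 \<le> u \<Longrightarrow> J u = exp (- u) * P u * (exp u - exp (a u)) - exp (- u) * (Q u - Q (a u))"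
  proof -
    fix u :: real assume u: "0 \<le> u"
    have au: "0 \<le> a u" "a u \<le> u" using u tau0 by (auto simp: a_def)
    have "J u = integral {a u..u} (\<lambda>s. exp (- u) * P u * exp s - exp (- u) * (exp s * P s))"
      unfolding J_def a_def
    proof (rule integral_cong)
      fix s assume s: "s \<in> {max 0 (u - 2 * \<tau>)..u}"
      have e: "exp (- (u - s)) = exp (- u) * exp s" by (simp add: exp_add[symmetric])
      have eq: "integral {s..u} M = P u - P s" using s by (intro P_diff) auto
      show "exp (- (u - s)) * integral {s..u} M = exp (- u) * P u * exp s - exp (- u) * (exp s * P s)"
        unfolding e eq by (simp add: algebra_simps)
    qed
    also have "\<dots> = integral {a u..u} (\<lambda>s. exp (- u) * P u * exp s) - integral {a u..u} (\<lambda>s. exp (- u) * (exp s * P s))"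
      by (rule integral_diff) (auto intro!: integrable_continuous_real continuous_intros EP_int au)
    also have "\<dots> = exp (- u) * P u * (exp u - exp (a u)) - exp (- u) * (Q u - Q (a u))"
      using au by (simp add: Q_diff)
    finally show "J u = exp (- u) * P u * (exp u - exp (a u)) - exp (- u) * (Q u - Q (a u))" .
  qed
  have G_cont: "\<And>T. continuous_on {0..T} G"
  proof -
    fix T :: real
    have a_cont: "continuous_on {0..T} a" unfolding a_def by (intro continuous_intros)
    have a_img: "a ` {0..T} \<subseteq> {0..T}" using tau0 by (auto simp: a_def)
    have "continuous_on {0..T} (\<lambda>u. D u + \<beta> * (exp (- u) * P u * (exp u - exp (a u)) - exp (- u) * (Q u - Q (a u))))"
      by (intro continuous_intros continuous_on_subset[OF D_cont] P_cont Q_cont a_cont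
          continuous_on_compose2[OF Q_cont a_cont a_img]) auto
    then show "continuous_on {0..T} G"
      by (rule continuous_on_eq) (simp add: G_eq J_eq)
  qed
  have Gsh: "\<And>c S. (\<lambda>r. r - c) ` S \<subseteq> {0..t} \<Longrightarrow> continuous_on S (\<lambda>r. G (r - c))"
    by (rule continuous_on_compose2[OF G_cont[of t]]) (auto intro!: continuous_intros)
  have Psh: "\<And>c S. (\<lambda>r. r - c) ` S \<subseteq> {0..t} \<Longrightarrow> continuous_on S (\<lambda>r. P (r - c))"
    by (rule continuous_on_compose2[OF P_cont[of t]]) (auto intro!: continuous_intros)
  have Dsh: "\<And>c S. (\<lambda>r. r - c) ` S \<subseteq> {0..} \<Longrightarrow> continuous_on S (\<lambda>r. D (r - c))"
    by (rule continuous_on_compose2[OF D_cont]) (auto intro!: continuous_intros)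
  have pw: "\<And>s. 2 * \<tau> \<le> s \<Longrightarrow> s \<le> t \<Longrightarrow> norm (v j (s - \<tau>) - v i (s - \<sigma>))
      \<le> G (s - \<tau>) + exp (2 * \<tau>) / \<beta> * G (s - \<sigma>) + integral {s - \<tau>..s - \<sigma>} (\<lambda>r. G (r - \<tau>))"
  proof -
    fix s :: real assume s1: "2 * \<tau> \<le> s" and s2: "s \<le> t"
    have s0: "0 \<le> s - 2 * \<tau>" using s1 by simp
    have A1: "norm (v j (s - \<tau>) - v i (s - \<sigma>)) \<le> D (s - \<tau>) + integral {s - \<tau>..s - \<sigma>} M"
    proof -
      have "norm (v j (s - \<tau>) - v i (s - \<sigma>)) \<le> norm (v j (s - \<tau>) - v i (s - \<tau>)) + norm (v i (s - \<tau>) - v i (s - \<sigma>))"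
        using norm_triangle_ineq[of "v j (s - \<tau>) - v i (s - \<tau>)" "v i (s - \<tau>) - v i (s - \<sigma>)"] by simp
      also have "\<dots> \<le> D (s - \<tau>) + integral {s - \<tau>..s - \<sigma>} M"
        using D_ge[OF ij(2) ij(1), of "s - \<tau>"] v_diff[OF ij(1), of "s - \<tau>" "s - \<sigma>"] s0 tau0 delays
        by (simp add: norm_minus_commute)
      finally show ?thesis .
    qed
    define I where "I = (\<lambda>r. integral {r - \<tau>..r - \<sigma>} M)"
    have I_eq: "\<And>r. \<tau> \<le> r \<Longrightarrow> I r = P (r - \<sigma>) - P (r - \<tau>)"
      unfolding I_def using delays by (intro P_diff) auto
    have intI: "I integrable_on {s - \<tau>..s - \<sigma>}"
    proof (rule integrable_continuous_real)
      have "continuous_on {s - \<tau>..s - \<sigma>} (\<lambda>r. P (r - \<sigma>) - P (r - \<tau>))"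
        using s1 s2 delays by (intro continuous_intros Psh) auto
      then show "continuous_on {s - \<tau>..s - \<sigma>} I"
        by (rule continuous_on_eq) (use s1 I_eq in auto)
    qed
    have intD: "(\<lambda>r. D (r - \<tau>)) integrable_on {s - \<tau>..s - \<sigma>}"
      using s1 by (intro integrable_continuous_real Dsh) auto
    have intG: "(\<lambda>r. G (r - \<tau>)) integrable_on {s - \<tau>..s - \<sigma>}"
      using s1 s2 delays by (intro integrable_continuous_real Gsh) auto
    have A3: "integral {s - \<tau>..s - \<sigma>} M \<le> integral {s - \<tau>..s - \<sigma>} (\<lambda>r. D (r - \<tau>)) + integral {s - \<tau>..s - \<sigma>} I"
    proof (cases "\<tau> = 0")
      case True
      then have "\<sigma> = 0" using delays by simp
      then show ?thesis using True by simp
    next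
      case False
      then have tp: "0 < \<tau>" using tau0 by simp
      have "integral {s - \<tau>..s - \<sigma>} M \<le> integral {s - \<tau>..s - \<sigma>} (\<lambda>r. D (r - \<tau>) + I r)"
      proof (rule integral_le)
        show "M integrable_on {s - \<tau>..s - \<sigma>}" using s0 tau0 by (intro M_int) simp
        show "(\<lambda>r. D (r - \<tau>) + I r) integrable_on {s - \<tau>..s - \<sigma>}" using intD intI by (rule integrable_add)
        fix r assume "r \<in> {s - \<tau>..s - \<sigma>}"
        then show "M r \<le> D (r - \<tau>) + I r" unfolding I_def using s1 tp by (intro ode_bd) auto
      qed
      also have "\<dots> = integral {s - \<tau>..s - \<sigma>} (\<lambda>r. D (r - \<tau>)) + integral {s - \<tau>..s - \<sigma>} I"
        using intD intI by (rule integral_add)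
      finally show ?thesis .
    qed
    have A4: "integral {s - \<tau>..s - \<sigma>} (\<lambda>r. D (r - \<tau>)) \<le> integral {s - \<tau>..s - \<sigma>} (\<lambda>r. G (r - \<tau>))"
      using intD intG DG by (intro integral_le) auto
    have A5: "integral {s - \<tau>..s - \<sigma>} I \<le> exp (2 * \<tau>) * J (s - \<sigma>)"
    proof -
      have c1: "continuous_on {s - 2 * \<tau>..s - \<sigma>} (\<lambda>u. exp (- (s - \<sigma> - u)) * (P (s - \<sigma>) - P u))"
        using P_cont[of t] s0 s2 delays
        by (intro continuous_intros continuous_on_subset[OF P_cont[of t]]) auto
      have c2: "continuous_on {a (s - \<sigma>)..s - \<sigma>} (\<lambda>u. exp (- (s - \<sigma> - u)) * (P (s - \<sigma>) - P u))"
        using s2 delays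
        by (intro continuous_intros continuous_on_subset[OF P_cont[of t]]) (auto simp: a_def)
      have "integral {s - \<tau>..s - \<sigma>} I \<le> integral {s - \<tau>..s - \<sigma>} (\<lambda>r. P (s - \<sigma>) - P (r - \<tau>))"
      proof (rule integral_le[OF intI])
        show "(\<lambda>r. P (s - \<sigma>) - P (r - \<tau>)) integrable_on {s - \<tau>..s - \<sigma>}"
          using s1 s2 delays by (intro integrable_continuous_real continuous_intros Psh) auto
        fix r assume r: "r \<in> {s - \<tau>..s - \<sigma>}"
        then have "P (r - \<sigma>) \<le> P (s - \<sigma>)" using s1 delays by (intro P_mono) auto
        then show "I r \<le> P (s - \<sigma>) - P (r - \<tau>)" using I_eq[of r] r s1 by auto
      qed
      also have "\<dots> = integral {s - 2 * \<tau>..s - \<sigma> - \<tau>} (\<lambda>u. P (s - \<sigma>) - P u)"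
        using integral_shift_Icc_real[of "s - 2 * \<tau>" "s - \<sigma> - \<tau>" "\<lambda>r. P (s - \<sigma>) - P (r - \<tau>)" \<tau>]
        by (simp add: o_def algebra_simps)
      also have "\<dots> \<le> integral {s - 2 * \<tau>..s - \<sigma> - \<tau>} (\<lambda>u. exp (2 * \<tau>) * (exp (- (s - \<sigma> - u)) * (P (s - \<sigma>) - P u)))"
      proof (rule integral_le)
        show "(\<lambda>u. P (s - \<sigma>) - P u) integrable_on {s - 2 * \<tau>..s - \<sigma> - \<tau>}"
          using s0 s2 delays by (intro integrable_continuous_real continuous_intros continuous_on_subset[OF P_cont[of t]]) auto
        show "(\<lambda>u. exp (2 * \<tau>) * (exp (- (s - \<sigma> - u)) * (P (s - \<sigma>) - P u))) integrable_on {s - 2 * \<tau>..s - \<sigma> - \<tau>}"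
          using s0 s2 delays by (intro integrable_continuous_real continuous_intros continuous_on_subset[OF P_cont[of t]]) auto
        fix u assume u: "u \<in> {s - 2 * \<tau>..s - \<sigma> - \<tau>}"
        have y: "0 \<le> P (s - \<sigma>) - P u" using u s0 tau0 P_mono[of u "s - \<sigma>"] by auto
        have "exp (2 * \<tau>) * exp (- (s - \<sigma> - u)) = exp (2 * \<tau> - (s - \<sigma> - u))" by (simp add: exp_add[symmetric])
        also have "\<dots> \<ge> 1" using u delays by simp
        finally have "1 \<le> exp (2 * \<tau>) * exp (- (s - \<sigma> - u))" .
        then show "P (s - \<sigma>) - P u \<le> exp (2 * \<tau>) * (exp (- (s - \<sigma> - u)) * (P (s - \<sigma>) - P u))"
          using y mult_right_mono[of 1 "exp (2 * \<tau>) * exp (- (s - \<sigma> - u))" "P (s - \<sigma>) - P u"]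
          by (simp add: mult.assoc)
      qed
      also have "\<dots> = exp (2 * \<tau>) * integral {s - 2 * \<tau>..s - \<sigma> - \<tau>} (\<lambda>u. exp (- (s - \<sigma> - u)) * (P (s - \<sigma>) - P u))"
        by simp
      also have "\<dots> \<le> exp (2 * \<tau>) * integral {a (s - \<sigma>)..s - \<sigma>} (\<lambda>u. exp (- (s - \<sigma> - u)) * (P (s - \<sigma>) - P u))"
      proof (rule mult_left_mono[OF integral_subset_le])
        show "{s - 2 * \<tau>..s - \<sigma> - \<tau>} \<subseteq> {a (s - \<sigma>)..s - \<sigma>}" using s0 delays by (auto simp: a_def)
        show "(\<lambda>u. exp (- (s - \<sigma> - u)) * (P (s - \<sigma>) - P u)) integrable_on {s - 2 * \<tau>..s - \<sigma> - \<tau>}"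
          by (rule integrable_continuous_real, rule continuous_on_subset[OF c1]) (use delays in auto)
        show "(\<lambda>u. exp (- (s - \<sigma> - u)) * (P (s - \<sigma>) - P u)) integrable_on {a (s - \<sigma>)..s - \<sigma>}"
          using c2 by (rule integrable_continuous_real)
        show "\<forall>u\<in>{a (s - \<sigma>)..s - \<sigma>}. 0 \<le> exp (- (s - \<sigma> - u)) * (P (s - \<sigma>) - P u)"
          using P_mono by (auto simp: a_def)
      qed simp
      also have "\<dots> = exp (2 * \<tau>) * J (s - \<sigma>)"
      proof -
        have "integral {a (s - \<sigma>)..s - \<sigma>} (\<lambda>u. exp (- (s - \<sigma> - u)) * (P (s - \<sigma>) - P u)) = J (s - \<sigma>)"
          unfolding J_def a_def
          by (rule integral_cong) (simp add: P_diff)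
        then show ?thesis by simp
      qed
      finally show ?thesis .
    qed
    have A6: "exp (2 * \<tau>) * J (s - \<sigma>) \<le> exp (2 * \<tau>) / \<beta> * G (s - \<sigma>)"
    proof -
      have "J (s - \<sigma>) \<le> G (s - \<sigma>) / \<beta>" using JG[of "s - \<sigma>"] beta by (simp add: field_simps mult.commute)
      then have "exp (2 * \<tau>) * J (s - \<sigma>) \<le> exp (2 * \<tau>) * (G (s - \<sigma>) / \<beta>)" by (intro mult_left_mono) auto
      then show ?thesis by simp
    qed
    show "norm (v j (s - \<tau>) - v i (s - \<sigma>))
      \<le> G (s - \<tau>) + exp (2 * \<tau>) / \<beta> * G (s - \<sigma>) + integral {s - \<tau>..s - \<sigma>} (\<lambda>r. G (r - \<tau>))"
      using A1 A3 A4 A5 A6 DG[of "s - \<tau>"] by linarith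
  qed
  define R where "R = (\<lambda>y. integral {\<tau>..y} (\<lambda>r. G (r - \<tau>)))"
  have Gs_cont: "continuous_on {\<tau>..t} (\<lambda>r. G (r - \<tau>))"
    using tau0 by (intro Gsh) auto
  have R_cont: "continuous_on {\<tau>..t} R"
    unfolding R_def by (rule indefinite_integral_continuous_1, rule integrable_continuous_real, rule Gs_cont)
  have R_diff: "\<And>c d. \<tau> \<le> c \<Longrightarrow> c \<le> d \<Longrightarrow> d \<le> t \<Longrightarrow> integral {c..d} (\<lambda>r. G (r - \<tau>)) = R d - R c"
  proof -
    fix c d :: real assume cd: "\<tau> \<le> c" "c \<le> d" "d \<le> t"
    have "(\<lambda>r. G (r - \<tau>)) integrable_on {\<tau>..d}"
      by (rule integrable_continuous_real, rule continuous_on_subset[OF Gs_cont]) (use cd in auto)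
    then have "integral {\<tau>..c} (\<lambda>r. G (r - \<tau>)) + integral {c..d} (\<lambda>r. G (r - \<tau>)) = integral {\<tau>..d} (\<lambda>r. G (r - \<tau>))"
      using cd by (intro Henstock_Kurzweil_Integration.integral_combine) auto
    then show "integral {c..d} (\<lambda>r. G (r - \<tau>)) = R d - R c" by (simp add: R_def)
  qed
  have rhs_cont: "continuous_on {2 * \<tau>..t} (\<lambda>s. G (s - \<tau>) + exp (2 * \<tau>) / \<beta> * G (s - \<sigma>)
      + integral {s - \<tau>..s - \<sigma>} (\<lambda>r. G (r - \<tau>)))"
  proof -
    have Rsh: "\<And>c. (\<lambda>r. r - c) ` {2 * \<tau>..t} \<subseteq> {\<tau>..t} \<Longrightarrow> continuous_on {2 * \<tau>..t} (\<lambda>r. R (r - c))"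
      by (rule continuous_on_compose2[OF R_cont]) (auto intro!: continuous_intros)
    have "continuous_on {2 * \<tau>..t} (\<lambda>s. G (s - \<tau>) + exp (2 * \<tau>) / \<beta> * G (s - \<sigma>) + (R (s - \<sigma>) - R (s - \<tau>)))"
      using delays tau0 by (intro continuous_intros Gsh Rsh) auto
    then show ?thesis
      by (rule continuous_on_eq) (use delays in \<open>auto intro!: R_diff[symmetric]\<close>)
  qed
  define f where "f = (\<lambda>s. x j (s - \<tau>) - x i (s - \<sigma>))"
  have tt: "2 * \<tau> \<le> t" using t by simp
  have fint: "((\<lambda>s. v j (s - \<tau>) - v i (s - \<sigma>)) has_integral (f t - f (2 * \<tau>))) {2 * \<tau>..t}"
  proof (rule fundamental_theorem_of_calculus[OF tt])
    fix s assume s: "s \<in> {2 * \<tau>..t}"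
    have d1: "((\<lambda>u. x j (u - \<tau>)) has_vector_derivative v j (s - \<tau>)) (at s within {2 * \<tau>..t})"
      by (rule shift_deriv[OF x_deriv[OF ij(2)]]) (use s tau0 in auto)
    have d2: "((\<lambda>u. x i (u - \<sigma>)) has_vector_derivative v i (s - \<sigma>)) (at s within {2 * \<tau>..t})"
      by (rule shift_deriv[OF x_deriv[OF ij(1)]]) (use s tau0 delays in auto)
    show "(f has_vector_derivative v j (s - \<tau>) - v i (s - \<sigma>)) (at s within {2 * \<tau>..t})"
      unfolding f_def using d1 d2 by (rule has_vector_derivative_diff)
  qed
  have "norm (f t) \<le> norm (f (2 * \<tau>)) + norm (f t - f (2 * \<tau>))"
    using norm_triangle_ineq[of "f (2 * \<tau>)" "f t - f (2 * \<tau>)"] by simp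
  also have "norm (f t - f (2 * \<tau>)) = norm (integral {2 * \<tau>..t} (\<lambda>s. v j (s - \<tau>) - v i (s - \<sigma>)))"
    using fint by (simp add: integral_unique)
  also have "\<dots> \<le> integral {2 * \<tau>..t} (\<lambda>s. G (s - \<tau>) + exp (2 * \<tau>) / \<beta> * G (s - \<sigma>)
      + integral {s - \<tau>..s - \<sigma>} (\<lambda>r. G (r - \<tau>)))"
    using fint rhs_cont pw
    by (intro integral_norm_bound_integral) (auto intro: has_integral_integrable integrable_continuous_real)
  finally show ?thesis by (simp add: f_def G_def)
qed

end
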